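(* Let $\mu\in\mathbb{R}^J$ and let $\Lambda\in\mathbb{R}^{J\times J}$ be a symmetric positive semidefinite matrix satisfying (i) $2\sum_{s=1}^J\Lambda_{rs}\ge\Lambda_{rr}$ for all $r\in[J]$, and (ii) $\Lambda_{rs}\le 0$ for all $r,s\in[J]$ with $r\ne s$. Then the function $g:\{0,1\}^J\to\mathbb{R}$, $g(y)=\mu^{\top}y+\sqrt{y^{\top}\Lambda y}$, is submodular.
   Context: $[J]=\{1,\dots,J\}$. A vector $y\in\{0,1\}^J$ is identified with the subset $R=\{j: y_j=1\}\subseteq[J]$. A set function $h$ on subsets of $[J]$ is submodular if $h(R\cup\{j\})-h(R)\ge h(S\cup\{j\})-h(S)$ for all $R\subseteq S\subseteq[J]$ and all $j\in[J]\setminus S$. *)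

theory Defs
  imports "HOL-Analysis.Analysis"
begin

text \<open>Vectors in R^J are functions nat => real restricted to {1..J};
  matrices in R^(J x J) are functions nat => nat => real restricted to {1..J} x {1..J}.
  A 0/1 vector y is identified with the subset R = {j. y_j = 1} of {1..J}.\<close>

definition submodular_on :: "nat set \<Rightarrow> (nat set \<Rightarrow> real) \<Rightarrow> bool" where
  "submodular_on V h \<longleftrightarrow>
     (\<forall>R S j. R \<subseteq> S \<and> S \<subseteq> V \<and> j \<in> V - S \<longrightarrow>
        h (R \<union> {j}) - h R \<ge> h (S \<union> {j}) - h S)"

definition sym_psd :: "nat \<Rightarrow> (nat \<Rightarrow> nat \<Rightarrow> real) \<Rightarrow> bool" where
  "sym_psd J L \<longleftrightarrow>
     (\<forall>r\<in>{1..J}. \<forall>s\<in>{1..J}. L r s = L s r) \<and>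
     (\<forall>x :: nat \<Rightarrow> real. (\<Sum>r\<in>{1..J}. \<Sum>s\<in>{1..J}. x r * L r s * x s) \<ge> 0)"

definition gfun :: "(nat \<Rightarrow> real) \<Rightarrow> (nat \<Rightarrow> nat \<Rightarrow> real) \<Rightarrow> nat set \<Rightarrow> real" where
  "gfun mu L R = (\<Sum>j\<in>R. mu j) + sqrt (\<Sum>r\<in>R. \<Sum>s\<in>R. L r s)"

end

theory Submission
  imports Defs
begin

definition qf :: "(nat \<Rightarrow> nat \<Rightarrow> real) \<Rightarrow> nat set \<Rightarrow> real" where
  "qf L A = (\<Sum>r\<in>A. \<Sum>s\<in>A. L r s)"

lemma qf_insert:
  assumes "finite A" "k \<notin> A" "\<forall>r\<in>A. L r k = L k r"
  shows "qf L (insert k A) = qf L A + L k k + 2 * (\<Sum>a\<in>A. L k a)"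
proof -
  have "qf L (insert k A) = (\<Sum>s\<in>insert k A. L k s) + (\<Sum>r\<in>A. L r k + (\<Sum>s\<in>A. L r s))"
    unfolding qf_def using assms by (simp add: sum.insert)
  also have "\<dots> = L k k + (\<Sum>s\<in>A. L k s) + (\<Sum>r\<in>A. L k r) + qf L A"
    using assms by (simp add: sum.insert sum.distrib qf_def)
  finally show ?thesis by simp
qed

lemma incr_nonneg:
  fixes J :: nat
  assumes diag: "\<forall>r\<in>{1..J}. 2 * (\<Sum>s\<in>{1..J}. L r s) \<ge> L r r"
    and offdiag: "\<forall>r\<in>{1..J}. \<forall>s\<in>{1..J}. r \<noteq> s \<longrightarrow> L r s \<le> (0::real)"
    and A: "A \<subseteq> {1..J}" and k: "k \<in> {1..J}" "k \<notin> A"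
  shows "L k k + 2 * (\<Sum>a\<in>A. L k a) \<ge> 0"
proof -
  let ?B = "{1..J} - {k}"
  have fin: "finite ?B" by simp
  have AB: "A \<subseteq> ?B" using A k by auto
  have s1: "(\<Sum>s\<in>{1..J}. L k s) = L k k + (\<Sum>s\<in>?B. L k s)"
    using k by (metis finite_atLeastAtMost sum.remove)
  have s2: "(\<Sum>s\<in>?B. L k s) = (\<Sum>s\<in>A. L k s) + (\<Sum>s\<in>?B - A. L k s)"
    using AB fin by (metis add.commute sum.subset_diff)
  have s3: "(\<Sum>s\<in>?B - A. L k s) \<le> 0"
    by (rule sum_nonpos) (use offdiag k in auto)
  have "2 * (\<Sum>s\<in>{1..J}. L k s) \<ge> L k k" using diag k by auto
  then show ?thesis using s1 s2 s3 by linarith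
qed

lemma qf_mono_aux:
  fixes J :: nat
  assumes diag: "\<forall>r\<in>{1..J}. 2 * (\<Sum>s\<in>{1..J}. L r s) \<ge> L r r"
    and offdiag: "\<forall>r\<in>{1..J}. \<forall>s\<in>{1..J}. r \<noteq> s \<longrightarrow> L r s \<le> (0::real)"
    and sym: "\<forall>r\<in>{1..J}. \<forall>s\<in>{1..J}. L r s = L s r"
    and A: "A \<subseteq> {1..J}"
  shows "finite T \<Longrightarrow> T \<subseteq> {1..J} \<Longrightarrow> qf L A \<le> qf L (A \<union> T)"
proof (induction T rule: finite_induct)
  case empty
  then show ?case by simp
next
  case (insert x F)
  show ?case
  proof (cases "x \<in> A \<union> F")
    case True
    then have "A \<union> insert x F = A \<union> F" by auto
    then show ?thesis using insert by auto
  next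
    case False
    have AF: "A \<union> F \<subseteq> {1..J}" using A insert by auto
    have fin: "finite (A \<union> F)" using AF finite_subset by blast
    have x: "x \<in> {1..J}" using insert by auto
    have "qf L (insert x (A \<union> F)) = qf L (A \<union> F) + L x x + 2 * (\<Sum>a\<in>A \<union> F. L x a)"
      by (rule qf_insert[OF fin False]) (use sym AF x in auto)
    moreover have "L x x + 2 * (\<Sum>a\<in>A \<union> F. L x a) \<ge> 0"
      by (rule incr_nonneg[OF diag offdiag AF x False])
    moreover have "A \<union> insert x F = insert x (A \<union> F)" by auto
    ultimately show ?thesis using insert by auto
  qed
qed

lemma sqrt_ineq:
  fixes x y d e :: real
  assumes "0 \<le> x" "x \<le> y" "0 \<le> e" "e \<le> d"
  shows "sqrt (x + d) - sqrt x \<ge> sqrt (y + e) - sqrt y"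
proof -
  have a: "sqrt (x + e) \<le> sqrt (x + d)" using assms(4) real_sqrt_le_mono by simp
  have m: "(y + e) * x \<le> (x + e) * y"
  proof -
    have "e * x \<le> e * y" using assms by (intro mult_left_mono) auto
    then show ?thesis by (simp add: algebra_simps)
  qed
  have b: "sqrt (y+e) * sqrt x \<le> sqrt (x+e) * sqrt y"
    using real_sqrt_le_mono[OF m] by (simp only: real_sqrt_mult)
  have y0: "0 \<le> y" "0 \<le> y + e" "0 \<le> x + e" using assms by linarith+
  have c: "(sqrt (y + e) + sqrt x)^2 \<le> (sqrt (x + e) + sqrt y)^2"
    unfolding power2_sum using b y0 assms(1) by simp
  have "sqrt (y + e) + sqrt x \<le> sqrt (x + e) + sqrt y"
    by (rule power2_le_imp_le[OF c]) (use y0 in simp)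
  then show ?thesis using a by linarith
qed

theorem proposition1:
  fixes J :: nat and mu :: "nat \<Rightarrow> real" and L :: "nat \<Rightarrow> nat \<Rightarrow> real"
  assumes psd: "sym_psd J L"
    and diag: "\<forall>r\<in>{1..J}. 2 * (\<Sum>s\<in>{1..J}. L r s) \<ge> L r r"
    and offdiag: "\<forall>r\<in>{1..J}. \<forall>s\<in>{1..J}. r \<noteq> s \<longrightarrow> L r s \<le> 0"
  shows "submodular_on {1..J} (gfun mu L)"
  unfolding submodular_on_def
proof (intro allI impI)
  fix R S j assume h: "R \<subseteq> S \<and> S \<subseteq> {1..J} \<and> j \<in> {1..J} - S"
  have sym: "\<forall>r\<in>{1..J}. \<forall>s\<in>{1..J}. L r s = L s r" using psd unfolding sym_psd_def by blast
  have S: "S \<subseteq> {1..J}" and R: "R \<subseteq> {1..J}" and j: "j \<in> {1..J}" "j \<notin> S" "j \<notin> R" using h by auto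
  have fS: "finite S" using S finite_subset by blast
  have fR: "finite R" using R finite_subset by blast
  have qR: "qf L (insert j R) = qf L R + (L j j + 2 * (\<Sum>a\<in>R. L j a))"
  proof -
    have "\<forall>r\<in>R. L r j = L j r" using sym R j by blast
    from qf_insert[OF fR j(3) this] show ?thesis by simp
  qed
  have qS: "qf L (insert j S) = qf L S + (L j j + 2 * (\<Sum>a\<in>S. L j a))"
  proof -
    have "\<forall>r\<in>S. L r j = L j r" using sym S j by blast
    from qf_insert[OF fS j(2) this] show ?thesis by simp
  qed
  have eS: "0 \<le> L j j + 2 * (\<Sum>a\<in>S. L j a)" by (rule incr_nonneg[OF diag offdiag S j(1,2)])
  have RS: "(\<Sum>a\<in>S. L j a) = (\<Sum>a\<in>R. L j a) + (\<Sum>a\<in>S - R. L j a)"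
    using h fS by (metis add.commute sum.subset_diff)
  have "(\<Sum>a\<in>S - R. L j a) \<le> 0" by (rule sum_nonpos) (use offdiag S j in \<open>metis DiffE atLeastAtMost_iff subsetD\<close>)
  then have ed: "L j j + 2 * (\<Sum>a\<in>S. L j a) \<le> L j j + 2 * (\<Sum>a\<in>R. L j a)" using RS by linarith
  have q0: "0 \<le> qf L R" using qf_mono_aux[OF diag offdiag sym, of "{}" R] R fR by (simp add: qf_def)
  have xy: "qf L R \<le> qf L S"
    using qf_mono_aux[OF diag offdiag sym R fS S] h by (simp add: Un_absorb1)
  have main: "sqrt (qf L R + (L j j + 2 * (\<Sum>a\<in>R. L j a))) - sqrt (qf L R)
      \<ge> sqrt (qf L S + (L j j + 2 * (\<Sum>a\<in>S. L j a))) - sqrt (qf L S)"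
    by (rule sqrt_ineq[OF q0 xy eS ed])
  have sR: "(\<Sum>x\<in>insert j R. mu x) = mu j + (\<Sum>x\<in>R. mu x)" using fR j by simp
  have sS: "(\<Sum>x\<in>insert j S. mu x) = mu j + (\<Sum>x\<in>S. mu x)" using fS j by simp
  show "gfun mu L (S \<union> {j}) - gfun mu L S \<le> gfun mu L (R \<union> {j}) - gfun mu L R"
    using main qR qS sR sS unfolding gfun_def qf_def[symmetric] by simp
qed

end
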